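(* Let $\mathbf{E}\subseteq\mathbf{A}$ be finite symmetric integral relation algebras such that $\mathbf{A}$ is a special extension of $\mathbf{E}$. Let $a,b$ be distinct diversity atoms of $\mathbf{E}$ and let $u,v$ be diversity atoms of $\mathbf{C}_{\mathbf{E}}(\mathbf{A})$. If $u\le J(a,0)$ and $v\le J(b,0)$, then $u;v=J(a;b,0)$. In particular, if $a;b=0'$ then $u;v=0'$.
   Context: Relation algebras are in the sense of Tarski; $1'$ identity, $0'$ its complement, $;$ relative product; integral: $1'$ is an atom; symmetric: $x^{\smile}=x$; a diversity atom is an atom below $0'$. Special extension: $\mathbf{A}$ is a special extension of $\mathbf{E}$ if for all diversity atoms $a,b,c$ of $\mathbf{E}$: (1) if not $a=b=c$ and $a;b\ge c$, then $x;y\ge c$ whenever $x,y$ are atoms of $\mathbf{A}$ with $x\le a$, $y\le b$; (2) if $a;a\ge a$ then $x;y\cdot a\ne0$ whenever $x,y$ are atoms of $\mathbf{A}$ below $a$. The algebra $\mathbf{C}_{\mathbf{E}}(\mathbf{A})$: for each atom $x$ of $\mathbf{A}$ let $c(x)$ be the atom of $\mathbf{E}$ with $x\le c(x)$; $T(i,j,k)$ iff $(i\le j=k)$ or $(j\le k=i)$ or $(k\le i=j)$. Atoms: $1'$ and $x^{(i)}$ for diversity atoms $x$ of $\mathbf{A}$ and $i\in\omega$. $C$ is the set of all permutations of $(1',1',1')$, $(1',x^{(i)},x^{(i)})$, and $(x^{(i)},y^{(j)},z^{(k)})$ with $x;y\ge z$ in $\mathbf{A}$ and ($c(x)=c(y)=c(z)\Rightarrow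 T(i,j,k)$). $\mathbf{C}_{\mathbf{E}}(\mathbf{A})$ is the algebra of all sets of atoms with set Boolean operations, identity $\{1'\}$ (so its diversity element $0'$ is the set of all $x^{(i)}$), converse the identity map, and $X;Y=\{w:\exists u\in X,\exists v\in Y,(u,v,w)\in C\}$. For $a\in\mathbf{A}$, $n\in\omega$, $J(a,n)$ is the join of all $x^{(i)}$ with $x$ a diversity atom of $\mathbf{A}$, $x\le a$, $n\le i$, together with $1'$ if $1'\le a$. *)

theory Defs
  imports Main
begin

record 'a ra =
  ra_carrier :: "'a set"
  ra_join :: "'a \<Rightarrow> 'a \<Rightarrow> 'a"
  ra_meet :: "'a \<Rightarrow> 'a \<Rightarrow> 'a"
  ra_cmpl :: "'a \<Rightarrow> 'a"
  ra_bot :: 'a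
  ra_top :: 'a
  ra_comp :: "'a \<Rightarrow> 'a \<Rightarrow> 'a"
  ra_conv :: "'a \<Rightarrow> 'a"
  ra_ident :: 'a

definition relation_algebra :: "('a, 'b) ra_scheme \<Rightarrow> bool" where
  "relation_algebra R \<longleftrightarrow>
    (let K = ra_carrier R; j = ra_join R; m = ra_meet R; c = ra_cmpl R;
         z = ra_bot R; t = ra_top R; p = ra_comp R; v = ra_conv R; e = ra_ident R in
     z \<in> K \<and> t \<in> K \<and> e \<in> K \<and>
     (\<forall>x\<in>K. \<forall>y\<in>K. j x y \<in> K \<and> m x y \<in> K \<and> p x y \<in> K) \<and>
     (\<forall>x\<in>K. c x \<in> K \<and> v x \<in> K) \<and>
     \<comment> \<open>Boolean algebra axioms\<close>
     (\<forall>x\<in>K. \<forall>y\<in>K. j x y = j y x \<and> m x y = m y x) \<and>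
     (\<forall>x\<in>K. \<forall>y\<in>K. \<forall>w\<in>K. j (j x y) w = j x (j y w) \<and> m (m x y) w = m x (m y w)) \<and>
     (\<forall>x\<in>K. \<forall>y\<in>K. j x (m x y) = x \<and> m x (j x y) = x) \<and>
     (\<forall>x\<in>K. \<forall>y\<in>K. \<forall>w\<in>K. m x (j y w) = j (m x y) (m x w)) \<and>
     (\<forall>x\<in>K. j x z = x \<and> m x t = x \<and> j x (c x) = t \<and> m x (c x) = z) \<and>
     \<comment> \<open>Tarski's relation algebra axioms\<close>
     (\<forall>x\<in>K. \<forall>y\<in>K. \<forall>w\<in>K. p (p x y) w = p x (p y w)) \<and>
     (\<forall>x\<in>K. \<forall>y\<in>K. \<forall>w\<in>K. p (j x y) w = j (p x w) (p y w)) \<and>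
     (\<forall>x\<in>K. p x e = x) \<and>
     (\<forall>x\<in>K. v (v x) = x) \<and>
     (\<forall>x\<in>K. \<forall>y\<in>K. v (j x y) = j (v x) (v y)) \<and>
     (\<forall>x\<in>K. \<forall>y\<in>K. v (p x y) = p (v y) (v x)) \<and>
     (\<forall>x\<in>K. \<forall>y\<in>K. j (p (v x) (c (p x y))) (c y) = c y))"

definition ra_le :: "('a, 'b) ra_scheme \<Rightarrow> 'a \<Rightarrow> 'a \<Rightarrow> bool" where
  "ra_le R x y \<longleftrightarrow> ra_join R x y = y"

definition ra_div :: "('a, 'b) ra_scheme \<Rightarrow> 'a" where
  "ra_div R = ra_cmpl R (ra_ident R)"

definition ra_atom :: "('a, 'b) ra_scheme \<Rightarrow> 'a \<Rightarrow> bool" where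
  "ra_atom R x \<longleftrightarrow> x \<in> ra_carrier R \<and> x \<noteq> ra_bot R \<and>
     (\<forall>y\<in>ra_carrier R. ra_le R y x \<longrightarrow> y = ra_bot R \<or> y = x)"

definition ra_div_atom :: "('a, 'b) ra_scheme \<Rightarrow> 'a \<Rightarrow> bool" where
  "ra_div_atom R x \<longleftrightarrow> ra_atom R x \<and> ra_le R x (ra_div R)"

definition ra_integral :: "('a, 'b) ra_scheme \<Rightarrow> bool" where
  "ra_integral R \<longleftrightarrow> ra_atom R (ra_ident R)"

definition ra_symmetric :: "('a, 'b) ra_scheme \<Rightarrow> bool" where
  "ra_symmetric R \<longleftrightarrow> (\<forall>x\<in>ra_carrier R. ra_conv R x = x)"

definition ra_finite :: "('a, 'b) ra_scheme \<Rightarrow> bool" where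
  "ra_finite R \<longleftrightarrow> finite (ra_carrier R)"

definition ra_restr :: "'a ra \<Rightarrow> 'a set \<Rightarrow> 'a ra" where
  "ra_restr A E = A\<lparr>ra_carrier := E\<rparr>"

definition ra_subuniverse :: "'a ra \<Rightarrow> 'a set \<Rightarrow> bool" where
  "ra_subuniverse A E \<longleftrightarrow> E \<subseteq> ra_carrier A \<and>
     ra_bot A \<in> E \<and> ra_top A \<in> E \<and> ra_ident A \<in> E \<and>
     (\<forall>x\<in>E. \<forall>y\<in>E. ra_join A x y \<in> E \<and> ra_meet A x y \<in> E \<and> ra_comp A x y \<in> E) \<and>
     (\<forall>x\<in>E. ra_cmpl A x \<in> E \<and> ra_conv A x \<in> E)"

definition special_extension :: "'a ra \<Rightarrow> 'a set \<Rightarrow> bool" where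
  "special_extension A E \<longleftrightarrow>
    (\<forall>a b c. ra_div_atom (ra_restr A E) a \<and> ra_div_atom (ra_restr A E) b \<and>
             ra_div_atom (ra_restr A E) c \<longrightarrow>
       ((\<not> (a = b \<and> b = c) \<and> ra_le A c (ra_comp A a b)) \<longrightarrow>
          (\<forall>x y. ra_atom A x \<and> ra_atom A y \<and> ra_le A x a \<and> ra_le A y b \<longrightarrow>
                 ra_le A c (ra_comp A x y))) \<and>
       (ra_le A a (ra_comp A a a) \<longrightarrow>
          (\<forall>x y. ra_atom A x \<and> ra_atom A y \<and> ra_le A x a \<and> ra_le A y a \<longrightarrow>
                 ra_meet A (ra_comp A x y) a \<noteq> ra_bot A)))"

text \<open>Atoms of C_E(A): None is the identity atom 1', Some (x, i) is x^(i).\<close>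

type_synonym 'a catom = "('a \<times> nat) option"

definition c_atoms :: "'a ra \<Rightarrow> 'a catom set" where
  "c_atoms A = {None} \<union> {Some (x, i) | x i. ra_div_atom A x}"

definition cE :: "'a ra \<Rightarrow> 'a set \<Rightarrow> 'a \<Rightarrow> 'a" where
  "cE A E x = (SOME e. ra_atom (ra_restr A E) e \<and> ra_le A x e)"

definition Trel :: "nat \<Rightarrow> nat \<Rightarrow> nat \<Rightarrow> bool" where
  "Trel i j k \<longleftrightarrow> (i \<le> j \<and> j = k) \<or> (j \<le> k \<and> k = i) \<or> (k \<le> i \<and> i = j)"

definition c_base :: "'a ra \<Rightarrow> 'a set \<Rightarrow> ('a catom \<times> 'a catom \<times> 'a catom) set" where
  "c_base A E =
     {(None, None, None)} \<union>
     {(None, Some (x, i), Some (x, i)) | x i. ra_div_atom A x} \<union>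
     {(Some (x, i), Some (y, j), Some (z, k)) | x y z i j k.
        ra_div_atom A x \<and> ra_div_atom A y \<and> ra_div_atom A z \<and>
        ra_le A z (ra_comp A x y) \<and>
        (cE A E x = cE A E y \<and> cE A E y = cE A E z \<longrightarrow> Trel i j k)}"

definition c_cycles :: "'a ra \<Rightarrow> 'a set \<Rightarrow> ('a catom \<times> 'a catom \<times> 'a catom) set" where
  "c_cycles A E = {(p, q, r). (p, q, r) \<in> c_base A E \<or> (p, r, q) \<in> c_base A E \<or>
                              (q, p, r) \<in> c_base A E \<or> (q, r, p) \<in> c_base A E \<or>
                              (r, p, q) \<in> c_base A E \<or> (r, q, p) \<in> c_base A E}"

definition CEA :: "'a ra \<Rightarrow> 'a set \<Rightarrow> 'a catom set ra" where
  "CEA A E =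
     \<lparr> ra_carrier = Pow (c_atoms A),
       ra_join = (\<union>),
       ra_meet = (\<inter>),
       ra_cmpl = (\<lambda>X. c_atoms A - X),
       ra_bot = {},
       ra_top = c_atoms A,
       ra_comp = (\<lambda>X Y. {w. \<exists>u\<in>X. \<exists>v\<in>Y. (u, v, w) \<in> c_cycles A E}),
       ra_conv = (\<lambda>X. X),
       ra_ident = {None} \<rparr>"

definition Jset :: "'a ra \<Rightarrow> 'a \<Rightarrow> nat \<Rightarrow> 'a catom set" where
  "Jset A a n = {Some (x, i) | x i. ra_div_atom A x \<and> ra_le A x a \<and> n \<le> i} \<union>
                (if ra_le A (ra_ident A) a then {None} else {})"

end

theory Submission
  imports Defs
begin

locale RAx =
  fixes R :: "('a, 'b) ra_scheme"
  assumes ra: "relation_algebra R"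
begin

abbreviation "K \<equiv> ra_carrier R"
abbreviation "jn \<equiv> ra_join R"
abbreviation "mt \<equiv> ra_meet R"
abbreviation "cp \<equiv> ra_cmpl R"
abbreviation "bt \<equiv> ra_bot R"
abbreviation "tp \<equiv> ra_top R"
abbreviation "cm \<equiv> ra_comp R"
abbreviation "cv \<equiv> ra_conv R"
abbreviation "ie \<equiv> ra_ident R"
abbreviation "le \<equiv> ra_le R"

lemma AX: "bt \<in> K \<and> tp \<in> K \<and> ie \<in> K \<and>
     (\<forall>x\<in>K. \<forall>y\<in>K. jn x y \<in> K \<and> mt x y \<in> K \<and> cm x y \<in> K) \<and>
     (\<forall>x\<in>K. cp x \<in> K \<and> cv x \<in> K) \<and>
     (\<forall>x\<in>K. \<forall>y\<in>K. jn x y = jn y x \<and> mt x y = mt y x) \<and>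
     (\<forall>x\<in>K. \<forall>y\<in>K. \<forall>w\<in>K. jn (jn x y) w = jn x (jn y w) \<and> mt (mt x y) w = mt x (mt y w)) \<and>
     (\<forall>x\<in>K. \<forall>y\<in>K. jn x (mt x y) = x \<and> mt x (jn x y) = x) \<and>
     (\<forall>x\<in>K. \<forall>y\<in>K. \<forall>w\<in>K. mt x (jn y w) = jn (mt x y) (mt x w)) \<and>
     (\<forall>x\<in>K. jn x bt = x \<and> mt x tp = x \<and> jn x (cp x) = tp \<and> mt x (cp x) = bt) \<and>
     (\<forall>x\<in>K. \<forall>y\<in>K. \<forall>w\<in>K. cm (cm x y) w = cm x (cm y w)) \<and>
     (\<forall>x\<in>K. \<forall>y\<in>K. \<forall>w\<in>K. cm (jn x y) w = jn (cm x w) (cm y w)) \<and>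
     (\<forall>x\<in>K. cm x ie = x) \<and>
     (\<forall>x\<in>K. cv (cv x) = x) \<and>
     (\<forall>x\<in>K. \<forall>y\<in>K. cv (jn x y) = jn (cv x) (cv y)) \<and>
     (\<forall>x\<in>K. \<forall>y\<in>K. cv (cm x y) = cm (cv y) (cv x)) \<and>
     (\<forall>x\<in>K. \<forall>y\<in>K. jn (cm (cv x) (cp (cm x y))) (cp y) = cp y)"
  using ra unfolding relation_algebra_def Let_def by blast

lemma bt_cl: "bt \<in> K" and tp_cl: "tp \<in> K" and ie_cl: "ie \<in> K"
  using AX by auto
lemma jn_cl: "x \<in> K \<Longrightarrow> y \<in> K \<Longrightarrow> jn x y \<in> K"
  and mt_cl: "x \<in> K \<Longrightarrow> y \<in> K \<Longrightarrow> mt x y \<in> K"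
  and cm_cl: "x \<in> K \<Longrightarrow> y \<in> K \<Longrightarrow> cm x y \<in> K"
  and cp_cl: "x \<in> K \<Longrightarrow> cp x \<in> K"
  and cv_cl: "x \<in> K \<Longrightarrow> cv x \<in> K"
  using AX by auto
lemma jn_comm: "x \<in> K \<Longrightarrow> y \<in> K \<Longrightarrow> jn x y = jn y x"
  and mt_comm: "x \<in> K \<Longrightarrow> y \<in> K \<Longrightarrow> mt x y = mt y x"
  using AX by auto
lemma jn_assoc: "x \<in> K \<Longrightarrow> y \<in> K \<Longrightarrow> w \<in> K \<Longrightarrow> jn (jn x y) w = jn x (jn y w)"
  and mt_assoc: "x \<in> K \<Longrightarrow> y \<in> K \<Longrightarrow> w \<in> K \<Longrightarrow> mt (mt x y) w = mt x (mt y w)"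
  using AX by auto
lemma absorb1: "x \<in> K \<Longrightarrow> y \<in> K \<Longrightarrow> jn x (mt x y) = x"
  and absorb2: "x \<in> K \<Longrightarrow> y \<in> K \<Longrightarrow> mt x (jn x y) = x"
  using AX by auto
lemma distr: "x \<in> K \<Longrightarrow> y \<in> K \<Longrightarrow> w \<in> K \<Longrightarrow> mt x (jn y w) = jn (mt x y) (mt x w)"
  using AX by auto
lemma jn_bt: "x \<in> K \<Longrightarrow> jn x bt = x" and mt_tp: "x \<in> K \<Longrightarrow> mt x tp = x"
  and jn_cp: "x \<in> K \<Longrightarrow> jn x (cp x) = tp" and mt_cp: "x \<in> K \<Longrightarrow> mt x (cp x) = bt"
  using AX by auto
lemma cm_distr: "x \<in> K \<Longrightarrow> y \<in> K \<Longrightarrow> w \<in> K \<Longrightarrow> cm (jn x y) w = jn (cm x w) (cm y w)"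
  using AX by auto
lemma cm_ie: "x \<in> K \<Longrightarrow> cm x ie = x" using AX by auto
lemma cv_cm: "x \<in> K \<Longrightarrow> y \<in> K \<Longrightarrow> cv (cm x y) = cm (cv y) (cv x)" using AX by auto
lemma tarski: "x \<in> K \<Longrightarrow> y \<in> K \<Longrightarrow> jn (cm (cv x) (cp (cm x y))) (cp y) = cp y"
  using AX by auto

lemma mt_idem: "x \<in> K \<Longrightarrow> mt x x = x"
  by (metis absorb2 jn_bt bt_cl)
lemma jn_idem: "x \<in> K \<Longrightarrow> jn x x = x"
  by (metis absorb1 mt_idem)

lemma le_mt: "x \<in> K \<Longrightarrow> y \<in> K \<Longrightarrow> le x y \<longleftrightarrow> mt x y = x"
  unfolding ra_le_def
  by (metis absorb1 absorb2 jn_comm mt_comm)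

lemma le_refl: "x \<in> K \<Longrightarrow> le x x" unfolding ra_le_def by (rule jn_idem)
lemma le_trans: "x \<in> K \<Longrightarrow> y \<in> K \<Longrightarrow> w \<in> K \<Longrightarrow> le x y \<Longrightarrow> le y w \<Longrightarrow> le x w"
  unfolding ra_le_def by (metis jn_assoc)
lemma le_antisym: "x \<in> K \<Longrightarrow> y \<in> K \<Longrightarrow> le x y \<Longrightarrow> le y x \<Longrightarrow> x = y"
  unfolding ra_le_def by (metis jn_comm)
lemma mt_le1: "x \<in> K \<Longrightarrow> y \<in> K \<Longrightarrow> le (mt x y) x"
  by (metis le_mt mt_cl mt_assoc mt_comm mt_idem)
lemma mt_le2: "x \<in> K \<Longrightarrow> y \<in> K \<Longrightarrow> le (mt x y) y"
  by (metis mt_le1 mt_comm)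
lemma mt_glb: "t \<in> K \<Longrightarrow> x \<in> K \<Longrightarrow> y \<in> K \<Longrightarrow> le t x \<Longrightarrow> le t y \<Longrightarrow> le t (mt x y)"
  by (metis le_mt mt_cl mt_assoc)
lemma bt_le: "x \<in> K \<Longrightarrow> le bt x"
  unfolding ra_le_def by (metis jn_bt jn_comm bt_cl)
lemma le_bt: "x \<in> K \<Longrightarrow> le x bt \<Longrightarrow> x = bt"
  by (metis bt_cl bt_le le_antisym)
lemma tp_ge: "x \<in> K \<Longrightarrow> le x tp"
  by (metis le_mt mt_tp tp_cl)
lemma mt_zero_cp: "x \<in> K \<Longrightarrow> t \<in> K \<Longrightarrow> mt x t = bt \<Longrightarrow> le x (cp t)"
proof -
  assume a: "x \<in> K" "t \<in> K" "mt x t = bt"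
  have "x = mt x (jn t (cp t))" using a by (simp add: jn_cp mt_tp)
  also have "\<dots> = jn bt (mt x (cp t))" using a by (simp add: distr cp_cl)
  also have "\<dots> = mt x (cp t)" using a by (metis jn_bt jn_comm bt_cl mt_cl cp_cl)
  finally show ?thesis using a by (metis le_mt cp_cl)
qed
lemma le_cp_disj: "x \<in> K \<Longrightarrow> t \<in> K \<Longrightarrow> le x t \<Longrightarrow> le x (cp t) \<Longrightarrow> x = bt"
  by (metis mt_glb cp_cl mt_cp le_bt)
lemma cm_mono_l: "x \<in> K \<Longrightarrow> y \<in> K \<Longrightarrow> w \<in> K \<Longrightarrow> le x y \<Longrightarrow> le (cm x w) (cm y w)"
  unfolding ra_le_def by (metis cm_distr)
lemma tarski_le: "x \<in> K \<Longrightarrow> y \<in> K \<Longrightarrow> le (cm (cv x) (cp (cm x y))) (cp y)"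
  unfolding ra_le_def by (rule tarski)

lemma atom_le_iff: "ra_atom R z \<Longrightarrow> t \<in> K \<Longrightarrow> le z t \<longleftrightarrow> mt t z \<noteq> bt"
proof -
  assume z: "ra_atom R z" and t: "t \<in> K"
  have zK: "z \<in> K" "z \<noteq> bt" and at: "\<And>y. y \<in> K \<Longrightarrow> le y z \<Longrightarrow> y = bt \<or> y = z"
    using z unfolding ra_atom_def by auto
  show ?thesis
  proof
    assume "le z t" then show "mt t z \<noteq> bt" using zK t by (metis le_mt mt_comm)
  next
    assume "mt t z \<noteq> bt"
    moreover have "le (mt t z) z" using zK t by (simp add: mt_le2)
    ultimately have "mt t z = z" using at zK t mt_cl by blast
    then show "le z t" using zK t by (metis le_mt mt_comm)
  qed
qed

end

locale RAs = RAx +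
  assumes sym: "ra_symmetric R"
begin

lemma cv_id: "x \<in> K \<Longrightarrow> cv x = x" using sym unfolding ra_symmetric_def by auto

lemma cm_comm: "x \<in> K \<Longrightarrow> y \<in> K \<Longrightarrow> cm x y = cm y x"
  by (metis cv_id cv_cm cm_cl)

lemma cm_mono_r: "x \<in> K \<Longrightarrow> y \<in> K \<Longrightarrow> w \<in> K \<Longrightarrow> le x y \<Longrightarrow> le (cm w x) (cm w y)"
  by (metis cm_comm cm_mono_l)

lemma cm_mono: "x \<in> K \<Longrightarrow> y \<in> K \<Longrightarrow> x' \<in> K \<Longrightarrow> y' \<in> K \<Longrightarrow> le x x' \<Longrightarrow> le y y'
   \<Longrightarrow> le (cm x y) (cm x' y')"
  by (meson cm_cl cm_mono_l cm_mono_r le_trans)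

lemma peirce: "x \<in> K \<Longrightarrow> y \<in> K \<Longrightarrow> w \<in> K \<Longrightarrow> mt (cm x y) w = bt \<Longrightarrow> mt (cm x w) y = bt"
proof -
  assume a: "x \<in> K" "y \<in> K" "w \<in> K" "mt (cm x y) w = bt"
  have "le w (cp (cm x y))" using a by (metis mt_zero_cp mt_comm cm_cl)
  then have 1: "le (cm x w) (cm x (cp (cm x y)))" using a by (simp add: cm_mono_r cm_cl cp_cl)
  have 2: "le (cm x (cp (cm x y))) (cp y)" using a tarski_le[of x y] by (simp add: cv_id)
  have 3: "le (cm x w) (cp y)" using 1 2 a by (meson le_trans cm_cl cp_cl)
  have "le (mt (cm x w) y) (cp y)" using 3 a by (meson le_trans mt_le1 cm_cl cp_cl mt_cl)
  moreover have "le (mt (cm x w) y) y" using a by (simp add: mt_le2 cm_cl)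
  ultimately show ?thesis using a by (meson le_cp_disj mt_cl cm_cl)
qed

lemma swap: "ra_atom R y \<Longrightarrow> ra_atom R z \<Longrightarrow> x \<in> K \<Longrightarrow> le z (cm x y) \<Longrightarrow> le y (cm x z)"
proof -
  assume a: "ra_atom R y" "ra_atom R z" "x \<in> K" "le z (cm x y)"
  have K: "y \<in> K" "z \<in> K" using a unfolding ra_atom_def by auto
  have "mt (cm x y) z \<noteq> bt" using a K atom_le_iff cm_cl by blast
  then have "mt (cm x z) y \<noteq> bt" using peirce a K by blast
  then show ?thesis using a K atom_le_iff cm_cl by blast
qed

lemma cyc: assumes "ra_atom R x" "ra_atom R y" "ra_atom R z"
  shows "le z (cm x y) \<longleftrightarrow> le z (cm y x)"
    "le z (cm x y) \<longleftrightarrow> le y (cm x z)"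
    "le z (cm x y) \<longleftrightarrow> le y (cm z x)"
    "le z (cm x y) \<longleftrightarrow> le x (cm y z)"
    "le z (cm x y) \<longleftrightarrow> le x (cm z y)"
proof -
  have K: "x \<in> K" "y \<in> K" "z \<in> K" using assms unfolding ra_atom_def by auto
  have s: "\<And>p q r. ra_atom R q \<Longrightarrow> ra_atom R r \<Longrightarrow> p \<in> K \<Longrightarrow> le r (cm p q) \<longleftrightarrow> le q (cm p r)"
    by (meson swap ra_atom_def)
  show 1: "le z (cm x y) \<longleftrightarrow> le z (cm y x)" using K cm_comm by metis
  show 2: "le z (cm x y) \<longleftrightarrow> le y (cm x z)" using s assms K by blast
  show "le z (cm x y) \<longleftrightarrow> le y (cm z x)" using 2 K cm_comm by metis
  have "le z (cm y x) \<longleftrightarrow> le x (cm y z)" using s assms K by blast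
  then show 4: "le z (cm x y) \<longleftrightarrow> le x (cm y z)" using 1 by simp
  show "le z (cm x y) \<longleftrightarrow> le x (cm z y)" using 4 K cm_comm by metis
qed

end

lemma restr_simps: "ra_le (ra_restr A E) = ra_le A" "ra_div (ra_restr A E) = ra_div A"
  "ra_bot (ra_restr A E) = ra_bot A"
  unfolding ra_restr_def ra_le_def[abs_def] ra_div_def by auto

lemma restr_atom: "ra_atom (ra_restr A E) e \<longleftrightarrow> e \<in> E \<and> e \<noteq> ra_bot A \<and>
   (\<forall>y\<in>E. ra_le A y e \<longrightarrow> y = ra_bot A \<or> y = e)"
  unfolding ra_atom_def restr_simps by (simp add: ra_restr_def)

lemma cea_divatom: assumes "ra_div_atom (CEA A E) u"
  shows "\<exists>x i. u = {Some (x, i)} \<and> ra_div_atom A x"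
proof -
  have u: "u \<subseteq> c_atoms A" "u \<noteq> {}" "\<forall>y\<in>Pow (c_atoms A). y \<union> u = u \<longrightarrow> y = {} \<or> y = u"
    "u \<subseteq> c_atoms A - {None}"
    using assms unfolding ra_div_atom_def ra_atom_def ra_le_def ra_div_def CEA_def by auto
  obtain w where w: "w \<in> u" using u by auto
  have "{w} = u" using u w by blast
  moreover obtain x i where "w = Some (x, i)" "ra_div_atom A x"
    using u w unfolding c_atoms_def by auto
  ultimately show ?thesis by auto
qed

lemma cea_le: "ra_le (CEA A E) u J \<longleftrightarrow> u \<subseteq> J"
  unfolding ra_le_def CEA_def by auto

theorem lemma3:
  fixes A :: "'a ra" and E :: "'a set" and a b :: 'a and u v :: "'a catom set"
  assumes "relation_algebra A" and "ra_finite A" and "ra_symmetric A" and "ra_integral A"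
    and "ra_subuniverse A E"
    and "relation_algebra (ra_restr A E)" and "ra_finite (ra_restr A E)"
    and "ra_symmetric (ra_restr A E)" and "ra_integral (ra_restr A E)"
    and "special_extension A E"
    and "ra_div_atom (ra_restr A E) a" and "ra_div_atom (ra_restr A E) b" and "a \<noteq> b"
    and "ra_div_atom (CEA A E) u" and "ra_div_atom (CEA A E) v"
    and "ra_le (CEA A E) u (Jset A a 0)" and "ra_le (CEA A E) v (Jset A b 0)"
  shows "ra_comp (CEA A E) u v = Jset A (ra_comp A a b) 0 \<and>
         (ra_comp A a b = ra_div A \<longrightarrow> ra_comp (CEA A E) u v = ra_div (CEA A E))"
proof -
  interpret RAs A using assms(1,3) by unfold_locales
  have sub: "E \<subseteq> K" "\<And>x y. x \<in> E \<Longrightarrow> y \<in> E \<Longrightarrow> mt x y \<in> E"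
    "\<And>x y. x \<in> E \<Longrightarrow> y \<in> E \<Longrightarrow> cm x y \<in> E" "\<And>x. x \<in> E \<Longrightarrow> cp x \<in> E" "tp \<in> E"
    using assms(5) unfolding ra_subuniverse_def by auto
  have finE: "finite E" using assms(7) unfolding ra_finite_def ra_restr_def by simp
  have ieat: "ra_atom A ie" using assms(4) unfolding ra_integral_def .
  have ieK: "ie \<in> K" "ie \<noteq> bt" using ieat unfolding ra_atom_def by auto
  have aE: "ra_atom (ra_restr A E) a" "le a (ra_div A)"
    using assms(11) unfolding ra_div_atom_def restr_simps by auto
  have bE: "ra_atom (ra_restr A E) b" "le b (ra_div A)"
    using assms(12) unfolding ra_div_atom_def restr_simps by auto
  have aK: "a \<in> E" "a \<in> K" "a \<noteq> bt" using aE(1) sub(1) unfolding restr_atom by auto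
  have bK: "b \<in> E" "b \<in> K" "b \<noteq> bt" using bE(1) sub(1) unfolding restr_atom by auto
  have disj: "mt e1 e2 = bt" if "ra_atom (ra_restr A E) e1" "ra_atom (ra_restr A E) e2" "e1 \<noteq> e2"
    for e1 e2
  proof -
    have e: "e1 \<in> E" "e2 \<in> E" "e1 \<noteq> bt" "e2 \<noteq> bt"
      "\<forall>y\<in>E. le y e1 \<longrightarrow> y = bt \<or> y = e1" "\<forall>y\<in>E. le y e2 \<longrightarrow> y = bt \<or> y = e2"
      using that unfolding restr_atom by auto
    have K: "e1 \<in> K" "e2 \<in> K" using e sub by auto
    have "mt e1 e2 = bt \<or> mt e1 e2 = e1" using e(5) sub(2)[OF e(1,2)] mt_le1[OF K] by blast
    moreover have "mt e1 e2 = e1 \<Longrightarrow> False"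
    proof -
      assume "mt e1 e2 = e1"
      then have "le e1 e2" using K le_mt by auto
      then show False using e that by auto
    qed
    ultimately show ?thesis by blast
  qed
  have ab: "mt a b = bt" using disj aE bE assms(13) by blast
  obtain x i where x: "u = {Some (x, i)}" "ra_div_atom A x" using cea_divatom assms(14) by blast
  obtain y j where y: "v = {Some (y, j)}" "ra_div_atom A y" using cea_divatom assms(15) by blast
  have xa: "le x a" using assms(16) x unfolding cea_le Jset_def by (auto split: if_splits)
  have yb: "le y b" using assms(17) y unfolding cea_le Jset_def by (auto split: if_splits)
  have xat: "ra_atom A x" "x \<in> K" "x \<noteq> bt" using x unfolding ra_div_atom_def ra_atom_def by auto
  have yat: "ra_atom A y" "y \<in> K" "y \<noteq> bt" using y unfolding ra_div_atom_def ra_atom_def by auto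
  have xy: "x \<noteq> y"
  proof
    assume "x = y"
    then have "le x (mt a b)" using xa yb xat(2) aK(2) bK(2) mt_glb[of x a b] by simp
    then show False using ab xat le_bt[of x] by simp
  qed
  have cE_eq: "cE A E z = e" if "le z e" "ra_atom (ra_restr A E) e" "ra_atom A z" for z e
    unfolding cE_def
  proof (rule some_equality)
    show "ra_atom (ra_restr A E) e \<and> le z e" using that by auto
  next
    fix e' assume h: "ra_atom (ra_restr A E) e' \<and> le z e'"
    show "e' = e"
    proof (rule ccontr)
      assume "e' \<noteq> e"
      then have m: "mt e' e = bt" using disj[of e' e] h that(2) by blast
      have K1: "e \<in> E" "e' \<in> E" using h that(2) unfolding restr_atom by auto
      have K: "e \<in> K" "e' \<in> K" "z \<in> K" using K1 sub(1) that(3) unfolding ra_atom_def by auto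
      have "le z (mt e' e)" using mt_glb[of z e' e] h that(1) K by blast
      then have "z = bt" using m le_bt[of z] K by simp
      then show False using that(3) unfolding ra_atom_def by auto
    qed
  qed
  have cx: "cE A E x = a" using cE_eq xa aE xat by blast
  have cy: "cE A E y = b" using cE_eq yb bE yat by blast
  have ab_div: "le (cm a b) (ra_div A)"
  proof -
    have "mt b a = bt" using ab mt_comm[of a b] aK bK by simp
    then have "le b (cp a)" using mt_zero_cp[of b a] aK bK by simp
    then have 1: "le (cm a b) (cm a (cp a))" using cm_mono_r[of b "cp a" a] aK bK cp_cl by simp
    have "le (cm (cv a) (cp (cm a ie))) (cp ie)" using tarski_le[of a ie] aK ieK by simp
    then have 2: "le (cm a (cp a)) (cp ie)" using aK cm_ie cv_id by simp
    show ?thesis unfolding ra_div_def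
      using le_trans[of "cm a b" "cm a (cp a)" "cp ie"] 1 2 aK bK ieK cm_cl cp_cl by simp
  qed
  have not_ie: "\<not> le ie (cm a b)"
  proof
    assume "le ie (cm a b)"
    then have "le ie (cp ie)" using ab_div le_trans[of ie "cm a b" "cp ie"] aK bK ieK cm_cl cp_cl
      unfolding ra_div_def by simp
    then have "ie = bt" using le_cp_disj[of ie ie] ieK le_refl by simp
    then show False using ieK by simp
  qed
  have key: "le z (cm x y) \<longleftrightarrow> le z (cm a b)" if z: "ra_div_atom A z" for z
  proof
    have zK: "z \<in> K" using z unfolding ra_div_atom_def ra_atom_def by auto
    assume h: "le z (cm x y)"
    have "le (cm x y) (cm a b)" using cm_mono[of x y a b] xa yb xat yat aK bK by simp
    then show "le z (cm a b)" using le_trans[of z "cm x y" "cm a b"] h zK xat yat aK bK cm_cl by simp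
  next
    have zat: "ra_atom A z" "z \<in> K" "z \<noteq> bt" "le z (ra_div A)"
      and zz: "\<forall>t\<in>K. le t z \<longrightarrow> t = bt \<or> t = z"
      using z unfolding ra_div_atom_def ra_atom_def by auto
    assume zab: "le z (cm a b)"
    have abE: "cm a b \<in> E" using sub(3) aK bK by auto
    define S where "S = {t \<in> E. le z t}"
    define m where "m t = card {s \<in> E. le s t}" for t
    have "tp \<in> S" unfolding S_def using sub(5) zat tp_ge by auto
    then obtain e where eS: "e \<in> S" and emin: "\<And>t. t \<in> S \<Longrightarrow> m e \<le> m t"
      using ex_has_least_nat[of "\<lambda>t. t \<in> S" tp m] by blast
    have eK: "e \<in> E" "e \<in> K" "le z e" using eS sub(1) unfolding S_def by auto
    have min: "s = e" if "s \<in> S" "le s e" for s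
    proof (rule ccontr)
      assume ne: "s \<noteq> e"
      have sK: "s \<in> E" "s \<in> K" using that sub(1) unfolding S_def by auto
      have "{r \<in> E. le r s} \<subset> {r \<in> E. le r e}"
      proof
        show "{r \<in> E. le r s} \<subseteq> {r \<in> E. le r e}"
        proof
          fix r assume r: "r \<in> {r \<in> E. le r s}"
          then have "r \<in> K" using sub(1) by auto
          then show "r \<in> {r \<in> E. le r e}" using r le_trans[of r s e] sK eK that(2) by simp
        qed
        have "\<not> le e s" using le_antisym[of s e] that(2) sK eK ne by auto
        then have "e \<notin> {r \<in> E. le r s}" by simp
        moreover have "e \<in> {r \<in> E. le r e}" using eK le_refl by auto
        ultimately show "{r \<in> E. le r s} \<noteq> {r \<in> E. le r e}" by blast
      qed
      then have "m s < m e" unfolding m_def using finE by (simp add: psubset_card_mono)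
      moreover have "m e \<le> m s" using emin that(1) by simp
      ultimately show False by simp
    qed
    have eat: "ra_atom (ra_restr A E) e"
      unfolding restr_atom
    proof (intro conjI ballI impI)
      show "e \<in> E" using eK by simp
      show "e \<noteq> bt" using eK zat le_bt[of z] by auto
      fix t assume t: "t \<in> E" "le t e"
      have tK: "t \<in> K" using t sub(1) by auto
      have "le (mt z t) z" using mt_le1[of z t] zat tK by simp
      then have "mt z t = bt \<or> mt z t = z" using zz mt_cl[of z t] zat tK by blast
      then show "t = bt \<or> t = e"
      proof
        assume "mt z t = z"
        then have "t \<in> S" unfolding S_def using t zat tK le_mt by auto
        then show ?thesis using min t by auto
      next
        assume "mt z t = bt"
        then have zc: "le z (cp t)" using mt_zero_cp[of z t] zat tK by simp
        have "le z (mt e (cp t))" using mt_glb[of z e "cp t"] zc eK zat tK cp_cl by simp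
        moreover have "mt e (cp t) \<in> E" using sub(2,4) eK t by simp
        ultimately have "mt e (cp t) \<in> S" unfolding S_def by simp
        moreover have "le (mt e (cp t)) e" using mt_le1[of e "cp t"] eK tK cp_cl by simp
        ultimately have "mt e (cp t) = e" using min by blast
        then have "le e (cp t)" using le_mt[of e "cp t"] eK tK cp_cl by simp
        then have "le t (cp t)" using le_trans[of t e "cp t"] t tK eK cp_cl by simp
        then show ?thesis using le_cp_disj[of t t] tK le_refl by simp
      qed
    qed
    have eat': "\<forall>t\<in>E. le t e \<longrightarrow> t = bt \<or> t = e" using eat unfolding restr_atom by auto
    have eab: "le e (cm a b)"
    proof -
      have "mt (cm a b) e \<in> E" using sub(2) abE eK by simp
      moreover have "le (mt (cm a b) e) e" using mt_le2[of "cm a b" e] abE sub(1) eK by auto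
      ultimately have "mt (cm a b) e = bt \<or> mt (cm a b) e = e" using eat' by blast
      moreover have "mt (cm a b) e \<noteq> bt"
      proof
        assume h: "mt (cm a b) e = bt"
        have "le z (mt (cm a b) e)" using mt_glb[of z "cm a b" e] zab eK zat abE sub(1) by auto
        then show False using h zat le_bt[of z] by auto
      qed
      ultimately have "mt (cm a b) e = e" by blast
      then show ?thesis using le_mt[of e "cm a b"] mt_comm[of e "cm a b"] eK abE sub(1) by auto
    qed
    have ediv: "le e (ra_div A)"
    proof -
      have "mt e ie \<in> E" using sub(2) eK assms(5) unfolding ra_subuniverse_def by auto
      moreover have "le (mt e ie) e" using mt_le1[of e ie] eK ieK by simp
      ultimately have "mt e ie = bt \<or> mt e ie = e" using eat' by blast
      then show ?thesis
      proof
        assume "mt e ie = bt" then show ?thesis unfolding ra_div_def using mt_zero_cp[of e ie] eK ieK by simp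
      next
        assume "mt e ie = e"
        then have "le e ie" using le_mt[of e ie] eK ieK by simp
        then have "e = bt \<or> e = ie" using ieat eK unfolding ra_atom_def by auto
        moreover have "e \<noteq> bt" using eat unfolding restr_atom by auto
        ultimately have "e = ie" by simp
        then have "z = bt" using le_cp_disj[of z ie] zat eK ieK unfolding ra_div_def by simp
        then show ?thesis using zat by simp
      qed
    qed
    have "ra_div_atom (ra_restr A E) e" unfolding ra_div_atom_def restr_simps using eat ediv by simp
    then have "le e (cm x y)"
      using assms(10) assms(11,12,13) eab xat yat xa yb unfolding special_extension_def by blast
    then show "le z (cm x y)" using le_trans[of z e "cm x y"] zat eK xat yat cm_cl by simp
  qed
  have cyc_iff: "(Some (x, i), Some (y, j), w) \<in> c_cycles A E \<longleftrightarrow>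
      (\<exists>z k. w = Some (z, k) \<and> ra_div_atom A z \<and> le z (cm x y))" for w
  proof (cases w)
    case None
    then show ?thesis using xy by (simp add: c_cycles_def c_base_def)
  next
    case (Some p)
    obtain z k where p: "p = (z, k)" by fastforce
    show ?thesis
    proof
      assume "(Some (x, i), Some (y, j), w) \<in> c_cycles A E"
      then have "ra_div_atom A z \<and> (le z (cm x y) \<or> le z (cm y x) \<or> le y (cm x z) \<or>
          le y (cm z x) \<or> le x (cm y z) \<or> le x (cm z y))"
        by (simp add: c_cycles_def c_base_def Some p) (elim disjE; simp)
      moreover have "ra_div_atom A z \<Longrightarrow> ra_atom A z" unfolding ra_div_atom_def by auto
      ultimately show "\<exists>z k. w = Some (z, k) \<and> ra_div_atom A z \<and> le z (cm x y)"
        using cyc[of x y z] xat yat Some p by blast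
    next
      assume "\<exists>z k. w = Some (z, k) \<and> ra_div_atom A z \<and> le z (cm x y)"
      then have "ra_div_atom A z" "le z (cm x y)" using Some p by auto
      then show "(Some (x, i), Some (y, j), w) \<in> c_cycles A E"
        using x(2) y(2) cx cy assms(13) by (simp add: c_cycles_def c_base_def Some p)
    qed
  qed
  have comp: "ra_comp (CEA A E) u v = {w. (Some (x, i), Some (y, j), w) \<in> c_cycles A E}"
    unfolding CEA_def x y by simp
  have J: "Jset A (cm a b) 0 = {Some (z, k) | z k. ra_div_atom A z \<and> le z (cm a b)}"
    unfolding Jset_def using not_ie by auto
  have part1: "ra_comp (CEA A E) u v = Jset A (ra_comp A a b) 0"
    unfolding comp J using cyc_iff key by auto
  moreover have "ra_comp (CEA A E) u v = ra_div (CEA A E)" if h: "ra_comp A a b = ra_div A"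
  proof -
    have "Jset A (cm a b) 0 = c_atoms A - {None}"
      unfolding J unfolding h c_atoms_def ra_div_atom_def by auto
    then show ?thesis using part1 unfolding ra_div_def CEA_def by simp
  qed
  ultimately show ?thesis by blast
qed

end
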